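(* Consider a finite population of $N$ units $i=1,\dots,N$ observed over two experiment iterations $t=1,2$. Each unit has a treatment path $\mathbf{Z}_i=(Z_{i,1},Z_{i,2})\in\{(c,c),(c,v_2),(v_1,v_2)\}$, where $c$ is control, $v_1$ is the treatment version used in iteration 1 and $v_2$ is the (possibly modified) version used in iteration 2. Each unit has fixed (non-random) potential outcomes $Y_{i,1}(z_1)$ for $z_1\in\{c,v_1,v_2\}$ and $Y_{i,2}(z_1,z_2)$ for $(z_1,z_2)\in\{(c,c),(c,v_2),(v_1,v_2)\}$. Assume the time-invariant control effect: $Y_{i,2}(c,v)-Y_{i,2}(c,c)=Y_{i,1}(v)-Y_{i,1}(c)$ for all $i$ and $v\in\{v_1,v_2\}$. Let fixed positive integers $N_{v_1},N_{c,v_2},N_{c,c}$ with $N_{v_1}+N_{c,v_2}+N_{c,c}=N$ be given (so that the iteration-1 treated proportion $p_1=N_{v_1}/N$ is strictly smaller than the iteration-2 treated proportion $p_2=(N_{v_1}+N_{c,v_2})/N$). The assignment is a two-iteration stepped-wedge completely randomized design: in iteration 1 a uniformly random set of $N_{v_1}$ units receives $v_1$ (and these units receive $v_2$ in iteration 2), and in iteration 2 a uniformly random subset of $N_{c,v_2}$ of the remaining units is moved from control to $v_2$; the other $N_{c,c}$ units stay in control in both iterations. The observed outcomes are $Y_{i,1}^{\mathrm{obs}}=Y_{i,1}(Z_{i,1})$ and $Y_{i,2}^{\mathrm{obs}}=Y_{i,2}(Z_{i,1},Z_{i,2})$. Define the population value of iterative experimentation $\tau_1=\frac1N\sum_{i=1}^N[Y_{i,1}(v_2)-Y_{i,1}(v_1)]$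 and the estimator $$\hat\tau_1=\frac{1}{N_{c,v_2}}\sum_{i=1}^N Y_{i,2}^{\mathrm{obs}}\mathbb{1}(\mathbf{Z}_i=(c,v_2))-\frac{1}{N_{v_1}}\sum_{i=1}^N Y_{i,1}^{\mathrm{obs}}\mathbb{1}(Z_{i,1}=v_1)-\frac{1}{N_{c,c}}\sum_{i=1}^N\big[Y_{i,2}^{\mathrm{obs}}-Y_{i,1}^{\mathrm{obs}}\big]\mathbb{1}(\mathbf{Z}_i=(c,c)).$$ Then $\mathbb{E}[\hat\tau_1]=\tau_1$ and $$\mathbb{V}[\hat\tau_1]=\frac{1}{N_{c,v_2}}S^2_{c,v_2}+\frac{1}{N_{v_1}}S^2_{v_1}+\frac{1}{N_{c,c}}S^2_{\Delta}-\frac1N S^2_\tau,$$ where, writing $\bar Y_2(c,v_2)=\frac1N\sum_i Y_{i,2}(c,v_2)$, $\bar Y_1(v_1)=\frac1N\sum_iY_{i,1}(v_1)$, $\bar Y_2(c,c)=\frac1N\sum_iY_{i,2}(c,c)$, $\bar Y_1(c)=\frac1N\sum_iY_{i,1}(c)$, $S^2_{c,v_2}=\frac{1}{N-1}\sum_i[Y_{i,2}(c,v_2)-\bar Y_2(c,v_2)]^2$, $S^2_{v_1}=\frac{1}{N-1}\sum_i[Y_{i,1}(v_1)-\bar Y_1(v_1)]^2$, $S^2_\Delta=\frac{1}{N-1}\sum_i[(Y_{i,2}(c,c)-Y_{i,1}(c))-(\bar Y_2(c,c)-\bar Y_1(c))]^2$, and $S^2_\tau=\frac{1}{N-1}\s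um_i[Y_{i,2}(c,v_2)-Y_{i,1}(v_1)-(Y_{i,2}(c,c)-Y_{i,1}(c))-\tau_1]^2$.
   Context: Expectations and variances are over the random assignment only; potential outcomes are fixed (finite-population, design-based framework). Writing potential outcomes as $Y_{i,1}(Z_{i,1})$ and $Y_{i,2}(Z_{i,1},Z_{i,2})$ encodes the paper's non-anticipation (iteration-1 outcomes do not depend on iteration-2 assignments) and no-interference (outcomes depend only on the unit's own path) assumptions. $Y_{i,1}(v_2)$ is a hypothetical potential outcome (the outcome had the final version been available in iteration 1). Under the time-invariant control effect, $\tau_1=\frac1N\sum_i[Y_{i,2}(c,v_2)-Y_{i,1}(v_1)-(Y_{i,2}(c,c)-Y_{i,1}(c))]$. *)

theory Defs
  imports "HOL-Probability.Probability"
begin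

datatype trt = C | V1 | V2

text \<open>An assignment is a pair (A,B): A = units treated with v1 in iteration 1
  (path (v1,v2)), B = units moved from control to v2 in iteration 2 (path (c,v2)).
  All other units have path (c,c).\<close>

definition Z1 :: "nat set \<times> nat set \<Rightarrow> nat \<Rightarrow> trt" where
  "Z1 AB i = (if i \<in> fst AB then V1 else C)"

definition Z2 :: "nat set \<times> nat set \<Rightarrow> nat \<Rightarrow> trt" where
  "Z2 AB i = (if i \<in> fst AB \<union> snd AB then V2 else C)"

definition sw_design :: "nat \<Rightarrow> nat \<Rightarrow> nat \<Rightarrow> (nat set \<times> nat set) pmf" where
  "sw_design N Nv1 Ncv2 =
     pmf_of_set {A. A \<subseteq> {..<N} \<and> card A = Nv1} \<bind> (\<lambda>A.
     pmf_of_set {B. B \<subseteq> {..<N} - A \<and> card B = Ncv2} \<bind> (\<lambda>B.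
     return_pmf (A, B)))"

definition Y1obs :: "(nat \<Rightarrow> trt \<Rightarrow> real) \<Rightarrow> nat set \<times> nat set \<Rightarrow> nat \<Rightarrow> real" where
  "Y1obs Y1 AB i = Y1 i (Z1 AB i)"

definition Y2obs :: "(nat \<Rightarrow> trt \<Rightarrow> trt \<Rightarrow> real) \<Rightarrow> nat set \<times> nat set \<Rightarrow> nat \<Rightarrow> real" where
  "Y2obs Y2 AB i = Y2 i (Z1 AB i) (Z2 AB i)"

definition ind :: "bool \<Rightarrow> real" where
  "ind b = (if b then 1 else 0)"

definition tau1 :: "nat \<Rightarrow> (nat \<Rightarrow> trt \<Rightarrow> real) \<Rightarrow> real" where
  "tau1 N Y1 = (1 / real N) * (\<Sum>i<N. Y1 i V2 - Y1 i V1)"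

definition tau1_hat ::
  "nat \<Rightarrow> nat \<Rightarrow> nat \<Rightarrow> nat \<Rightarrow> (nat \<Rightarrow> trt \<Rightarrow> real) \<Rightarrow> (nat \<Rightarrow> trt \<Rightarrow> trt \<Rightarrow> real)
     \<Rightarrow> nat set \<times> nat set \<Rightarrow> real" where
  "tau1_hat N Nv1 Ncv2 Ncc Y1 Y2 AB =
     (1 / real Ncv2) * (\<Sum>i<N. Y2obs Y2 AB i * ind (Z1 AB i = C \<and> Z2 AB i = V2))
   - (1 / real Nv1) * (\<Sum>i<N. Y1obs Y1 AB i * ind (Z1 AB i = V1))
   - (1 / real Ncc) * (\<Sum>i<N. (Y2obs Y2 AB i - Y1obs Y1 AB i) * ind (Z1 AB i = C \<and> Z2 AB i = C))"

definition S2 :: "nat \<Rightarrow> (nat \<Rightarrow> real) \<Rightarrow> real" where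
  "S2 N x = (1 / (real N - 1)) * (\<Sum>i<N. (x i - (1 / real N) * (\<Sum>j<N. x j))\<^sup>2)"

end

theory Submission
  imports Defs
begin


definition avg :: "'a set \<Rightarrow> ('a \<Rightarrow> real) \<Rightarrow> real" where
  "avg S f = sum f S / real (card S)"

lemma avg_add: "avg S (\<lambda>x. f x + g x) = avg S f + avg S g"
  by (simp add: avg_def sum.distrib add_divide_distrib)
lemma avg_diff: "avg S (\<lambda>x. f x - g x) = avg S f - avg S g"
  by (simp add: avg_def sum_subtractf diff_divide_distrib)
lemma avg_cmult: "avg S (\<lambda>x. c * f x) = c * avg S f"
  by (simp add: avg_def sum_distrib_left[symmetric])
lemma avg_const: "card S > 0 \<Longrightarrow> avg S (\<lambda>x. c) = c"
  by (simp add: avg_def)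
lemma avg_cong: "(\<And>x. x \<in> S \<Longrightarrow> f x = g x) \<Longrightarrow> avg S f = avg S g"
  by (simp add: avg_def cong: sum.cong)

lemma count_sup:
  assumes "finite U" "T \<subseteq> U" "card T \<le> k"
  shows "card {A. A \<subseteq> U \<and> card A = k \<and> T \<subseteq> A} = (card U - card T) choose (k - card T)"
proof -
  have fT: "finite T" using assms finite_subset by blast
  have "bij_betw (\<lambda>A. A - T) {A. A \<subseteq> U \<and> card A = k \<and> T \<subseteq> A} {B. B \<subseteq> U - T \<and> card B = k - card T}"
  proof (rule bij_betw_byWitness[where f'="\<lambda>B. B \<union> T"])
    show "\<forall>a\<in>{A. A \<subseteq> U \<and> card A = k \<and> T \<subseteq> A}. a - T \<union> T = a" by auto
    show "\<forall>a'\<in>{B. B \<subseteq> U - T \<and> card B = k - card T}. a' \<union> T - T = a'" by auto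
    show "(\<lambda>A. A - T) ` {A. A \<subseteq> U \<and> card A = k \<and> T \<subseteq> A} \<subseteq> {B. B \<subseteq> U - T \<and> card B = k - card T}"
    proof (clarsimp, intro conjI)
      fix A assume "A \<subseteq> U" "k = card A" "T \<subseteq> A"
      then show "card (A - T) = card A - card T"
        by (meson card_Diff_subset fT)
    qed auto
    show "(\<lambda>B. B \<union> T) ` {B. B \<subseteq> U - T \<and> card B = k - card T} \<subseteq> {A. A \<subseteq> U \<and> card A = k \<and> T \<subseteq> A}"
    proof (clarsimp, intro conjI)
      fix B assume B: "B \<subseteq> U - T" "card B = k - card T"
      have fB: "finite B" using B assms finite_subset by (metis Diff_subset finite_Diff)
      have "card (B \<union> T) = card B + card T"
        using B fB fT by (intro card_Un_disjoint) auto
      then show "card (B \<union> T) = k" using B assms by simp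
      show "B \<subseteq> U" using B by auto
      show "T \<subseteq> U" using assms by auto
    qed
  qed
  then have "card {A. A \<subseteq> U \<and> card A = k \<and> T \<subseteq> A} = card {B. B \<subseteq> U - T \<and> card B = k - card T}"
    by (rule bij_betw_same_card)
  also have "\<dots> = card (U - T) choose (k - card T)"
    using assms by (intro n_subsets) auto
  also have "card (U - T) = card U - card T"
    using assms fT by (simp add: card_Diff_subset)
  finally show ?thesis .
qed

lemma count_empty:
  assumes "finite U" "card T > k"
  shows "{A. A \<subseteq> U \<and> card A = k \<and> T \<subseteq> A} = {}"
proof -
  { fix A assume "A \<subseteq> U" "card A = k" "T \<subseteq> A"
    then have "card T \<le> card A" using assms by (meson card_mono finite_subset)
    then have False using assms \<open>card A = k\<close> by simp }
  then show ?thesis by blast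
qed

lemma count1:
  assumes "finite U" "i \<in> U" "k \<le> card U"
  shows "real (card {A \<in> {A. A \<subseteq> U \<and> card A = k}. i \<in> A}) = real k / real (card U) * real (card U choose k)"
proof -
  have eq: "{A \<in> {A. A \<subseteq> U \<and> card A = k}. i \<in> A} = {A. A \<subseteq> U \<and> card A = k \<and> {i} \<subseteq> A}" by auto
  show ?thesis
  proof (cases k)
    case 0
    then show ?thesis unfolding eq using count_empty[where U=U and T="{i}" and k=k] assms by simp
  next
    case (Suc k')
    have "card U > 0" using assms Suc by linarith
    have c: "card {A. A \<subseteq> U \<and> card A = k \<and> {i} \<subseteq> A} = (card U - 1) choose k'"
      using count_sup[of U "{i}" k] assms Suc by simp
    have "Suc k' * (card U choose Suc k') = card U * ((card U - 1) choose k')"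
      by (rule binomial_absorption)
    then have "real (Suc k') * real (card U choose Suc k') = real (card U) * real ((card U - 1) choose k')"
      by (metis of_nat_mult)
    then show ?thesis unfolding eq c using Suc \<open>card U > 0\<close> by (simp add: field_simps)
  qed
qed

lemma count2:
  assumes "finite U" "i \<in> U" "j \<in> U" "i \<noteq> j" "k \<le> card U"
  shows "real (card {A \<in> {A. A \<subseteq> U \<and> card A = k}. i \<in> A \<and> j \<in> A})
     = real k * (real k - 1) / (real (card U) * (real (card U) - 1)) * real (card U choose k)"
proof -
  have eq: "{A \<in> {A. A \<subseteq> U \<and> card A = k}. i \<in> A \<and> j \<in> A} = {A. A \<subseteq> U \<and> card A = k \<and> {i,j} \<subseteq> A}" by auto
  have cij: "card {i,j} = 2" using assms by simp
  show ?thesis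
  proof (cases "k < 2")
    case True
    then have "k = 0 \<or> k = 1" by auto
    then show ?thesis unfolding eq using count_empty[where U=U and T="{i,j}" and k=k] assms cij True by auto
  next
    case False
    then obtain k' where k': "k = Suc (Suc k')" by (metis add_2_eq_Suc le_Suc_ex not_less)
    have "card U \<ge> 2" using assms False by linarith
    then obtain n' where n': "card U = Suc (Suc n')" by (metis add_2_eq_Suc le_Suc_ex)
    have c: "card {A. A \<subseteq> U \<and> card A = k \<and> {i,j} \<subseteq> A} = n' choose k'"
      using count_sup[of U "{i,j}" k] assms k' n' cij by simp
    have e1: "Suc (Suc k') * (Suc (Suc n') choose Suc (Suc k')) = Suc (Suc n') * (Suc n' choose Suc k')"
      using binomial_absorption[of "Suc k'" "Suc (Suc n')"] by simp
    have e2: "Suc k' * (Suc n' choose Suc k') = Suc n' * (n' choose k')"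
      using binomial_absorption[of k' "Suc n'"] by simp
    have r1: "real (Suc (Suc k')) * real (Suc (Suc n') choose Suc (Suc k')) = real (Suc (Suc n')) * real (Suc n' choose Suc k')"
      using e1 by (metis of_nat_mult)
    have r2: "real (Suc k') * real (Suc n' choose Suc k') = real (Suc n') * real (n' choose k')"
      using e2 by (metis of_nat_mult)
    have "real (Suc (Suc k')) * real (Suc k') * real (Suc (Suc n') choose Suc (Suc k'))
          = real (Suc (Suc n')) * real (Suc n') * real (n' choose k')"
      using r1 r2 by (metis mult.commute mult.left_commute)
    then have H: "real k * (real k - 1) * real (card U choose k) = real (card U) * (real (card U) - 1) * real (n' choose k')"
      unfolding k' n' by simp
    have nz: "real (card U) * (real (card U) - 1) \<noteq> 0" using n' by simp
    have "card {A \<in> {A. A \<subseteq> U \<and> card A = k}. i \<in> A \<and> j \<in> A} = n' choose k'"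
      unfolding eq c ..
    then have "real (card {A \<in> {A. A \<subseteq> U \<and> card A = k}. i \<in> A \<and> j \<in> A})
       = real (card U) * (real (card U) - 1) * real (n' choose k') / (real (card U) * (real (card U) - 1))"
      using nz by simp
    also have "\<dots> = real k * (real k - 1) * real (card U choose k) / (real (card U) * (real (card U) - 1))"
      using H by simp
    finally show ?thesis by simp
  qed
qed

lemma finite_subsets_k: "finite U \<Longrightarrow> finite {A. A \<subseteq> U \<and> card A = k}"
  by (rule finite_subset[of _ "Pow U"]) auto

lemma sum_restrict_sub: "finite U \<Longrightarrow> A \<subseteq> U \<Longrightarrow> (\<Sum>i\<in>U. if i \<in> A then f i else 0) = (\<Sum>i\<in>A. f i)"
  by (simp add: sum.inter_restrict[symmetric] Int_absorb1)

lemma sum_count: "finite S \<Longrightarrow> (\<Sum>A\<in>S. if P A then (c::real) else 0) = c * real (card {A\<in>S. P A})"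
  by (subst sum.inter_filter[symmetric]) simp_all

lemma srs1:
  assumes "finite U" "k \<le> card U"
  shows "avg {A. A \<subseteq> U \<and> card A = k} (\<lambda>A. \<Sum>i\<in>A. x i) = real k / real (card U) * (\<Sum>i\<in>U. x i)"
proof -
  let ?S = "{A. A \<subseteq> U \<and> card A = k}"
  have fS: "finite ?S" using assms finite_subsets_k by blast
  have cS: "card ?S = card U choose k" using assms n_subsets by blast
  have Cpos: "real (card U choose k) > 0" using assms by simp
  have "(\<Sum>A\<in>?S. \<Sum>i\<in>A. x i) = (\<Sum>A\<in>?S. \<Sum>i\<in>U. if i \<in> A then x i else 0)"
    using assms by (intro sum.cong[OF refl]) (simp add: sum_restrict_sub)
  also have "\<dots> = (\<Sum>i\<in>U. \<Sum>A\<in>?S. if i \<in> A then x i else 0)" by (rule sum.swap)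
  also have "\<dots> = (\<Sum>i\<in>U. x i * real (card {A\<in>?S. i \<in> A}))"
    by (rule sum.cong[OF refl]) (use fS in \<open>rule sum_count\<close>)
  also have "\<dots> = (\<Sum>i\<in>U. x i * (real k / real (card U) * real (card U choose k)))"
  proof (rule sum.cong[OF refl])
    fix i assume iU: "i \<in> U"
    from count1[OF assms(1) iU assms(2)]
    show "x i * real (card {A\<in>?S. i \<in> A}) = x i * (real k / real (card U) * real (card U choose k))" by simp
  qed
  also have "\<dots> = (\<Sum>i\<in>U. x i) * (real k / real (card U) * real (card U choose k))"
    by (rule sum_distrib_right[symmetric])
  finally show ?thesis unfolding avg_def cS using Cpos
    by (simp add: field_simps)
qed

lemma div_aux: "(Cc::real) \<noteq> 0 \<Longrightarrow> (\<alpha>*Cc*Q + \<beta>*Cc*(Sx*Sy - Q))/Cc = (\<alpha>-\<beta>)*Q + \<beta>*Sx*Sy"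
  by (simp add: field_simps)

lemma sum_aux: fixes x y :: "'a \<Rightarrow> real" shows "(\<Sum>i\<in>U. x i * y i * c1 + x i * c2 * (Sy - y i)) = c1 * (\<Sum>i\<in>U. x i * y i) + c2 * ((\<Sum>i\<in>U. x i) * Sy - (\<Sum>i\<in>U. x i * y i))"
proof -
  have "(\<Sum>i\<in>U. x i * y i * c1 + x i * c2 * (Sy - y i)) = (\<Sum>i\<in>U. c1 * (x i * y i) + (c2 * Sy) * x i - c2 * (x i * y i))"
    by (rule sum.cong[OF refl]) (simp add: algebra_simps)
  also have "\<dots> = c1 * (\<Sum>i\<in>U. x i * y i) + (c2 * Sy) * (\<Sum>i\<in>U. x i) - c2 * (\<Sum>i\<in>U. x i * y i)"
    by (simp add: sum.distrib sum_subtractf sum_distrib_left)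
  finally show ?thesis by (simp add: algebra_simps)
qed

lemma srs2:
  assumes "finite U" "k \<le> card U" and U2: "card U \<ge> 2"
  shows "avg {A. A \<subseteq> U \<and> card A = k} (\<lambda>A. (\<Sum>i\<in>A. x i) * (\<Sum>i\<in>A. y i))
    = (real k / real (card U) - real k * (real k - 1) / (real (card U) * (real (card U) - 1))) * (\<Sum>i\<in>U. x i * y i)
      + real k * (real k - 1) / (real (card U) * (real (card U) - 1)) * (\<Sum>i\<in>U. x i) * (\<Sum>i\<in>U. y i)"
proof -
  let ?S = "{A. A \<subseteq> U \<and> card A = k}"
  let ?C = "real (card U choose k)"
  let ?c1 = "real k / real (card U) * ?C"
  let ?c2 = "real k * (real k - 1) / (real (card U) * (real (card U) - 1)) * ?C"
  have fS: "finite ?S" using assms finite_subsets_k by blast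
  have cS: "card ?S = card U choose k" using assms n_subsets by blast
  have Cpos: "?C > 0" using assms by simp
  have "(\<Sum>A\<in>?S. (\<Sum>i\<in>A. x i) * (\<Sum>i\<in>A. y i)) = (\<Sum>A\<in>?S. \<Sum>i\<in>U. \<Sum>j\<in>U. if i \<in> A \<and> j \<in> A then x i * y j else 0)"
  proof (rule sum.cong[OF refl])
    fix A assume "A \<in> ?S"
    then have AU: "A \<subseteq> U" by auto
    have "(\<Sum>i\<in>A. x i) * (\<Sum>i\<in>A. y i) = (\<Sum>i\<in>A. \<Sum>j\<in>A. x i * y j)" by (rule sum_product)
    also have "\<dots> = (\<Sum>i\<in>U. if i \<in> A then (\<Sum>j\<in>A. x i * y j) else 0)"
      using assms AU by (simp add: sum_restrict_sub)
    also have "\<dots> = (\<Sum>i\<in>U. \<Sum>j\<in>U. if i \<in> A \<and> j \<in> A then x i * y j else 0)"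
      by (rule sum.cong[OF refl]) (use assms AU in \<open>simp add: sum_restrict_sub\<close>)
    finally show "(\<Sum>i\<in>A. x i) * (\<Sum>i\<in>A. y i) = (\<Sum>i\<in>U. \<Sum>j\<in>U. if i \<in> A \<and> j \<in> A then x i * y j else 0)" .
  qed
  also have "\<dots> = (\<Sum>i\<in>U. \<Sum>A\<in>?S. \<Sum>j\<in>U. if i \<in> A \<and> j \<in> A then x i * y j else 0)" by (rule sum.swap)
  also have "\<dots> = (\<Sum>i\<in>U. \<Sum>j\<in>U. \<Sum>A\<in>?S. if i \<in> A \<and> j \<in> A then x i * y j else 0)"
    by (rule sum.cong[OF refl]) (rule sum.swap)
  also have "\<dots> = (\<Sum>i\<in>U. \<Sum>j\<in>U. x i * y j * real (card {A\<in>?S. i \<in> A \<and> j \<in> A}))"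
    by (intro sum.cong[OF refl]) (use fS in \<open>rule sum_count\<close>)
  also have "\<dots> = (\<Sum>i\<in>U. x i * y i * ?c1 + x i * ?c2 * ((\<Sum>j\<in>U. y j) - y i))"
  proof (rule sum.cong[OF refl])
    fix i assume iU: "i \<in> U"
    have "(\<Sum>j\<in>U. x i * y j * real (card {A\<in>?S. i \<in> A \<and> j \<in> A}))
       = x i * y i * real (card {A\<in>?S. i \<in> A \<and> i \<in> A}) + (\<Sum>j\<in>U-{i}. x i * y j * real (card {A\<in>?S. i \<in> A \<and> j \<in> A}))"
      using assms iU by (simp add: sum.remove)
    also have "(\<Sum>j\<in>U-{i}. x i * y j * real (card {A\<in>?S. i \<in> A \<and> j \<in> A})) = (\<Sum>j\<in>U-{i}. x i * ?c2 * y j)"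
    proof (rule sum.cong[OF refl])
      fix j assume j: "j \<in> U - {i}"
      have "real (card {A\<in>?S. i \<in> A \<and> j \<in> A}) = ?c2"
        using count2[OF assms(1) iU, of j k] j assms by auto
      then show "x i * y j * real (card {A\<in>?S. i \<in> A \<and> j \<in> A}) = x i * ?c2 * y j" by simp
    qed
    also have "\<dots> = x i * ?c2 * (\<Sum>j\<in>U-{i}. y j)" by (simp add: sum_distrib_left)
    also have "(\<Sum>j\<in>U-{i}. y j) = (\<Sum>j\<in>U. y j) - y i" using assms iU by (simp add: sum_diff1)
    also have "real (card {A\<in>?S. i \<in> A \<and> i \<in> A}) = ?c1" using count1[OF assms(1) iU assms(2)] by simp
    finally show "(\<Sum>j\<in>U. x i * y j * real (card {A\<in>?S. i \<in> A \<and> j \<in> A})) = x i * y i * ?c1 + x i * ?c2 * ((\<Sum>j\<in>U. y j) - y i)" .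
  qed
  also have "\<dots> = ?c1 * (\<Sum>i\<in>U. x i * y i) + ?c2 * ((\<Sum>i\<in>U. x i) * (\<Sum>j\<in>U. y j) - (\<Sum>i\<in>U. x i * y i))"
    by (rule sum_aux)
  finally have "(\<Sum>A\<in>?S. (\<Sum>i\<in>A. x i) * (\<Sum>i\<in>A. y i)) = ?c1 * (\<Sum>i\<in>U. x i * y i) + ?c2 * ((\<Sum>i\<in>U. x i) * (\<Sum>j\<in>U. y j) - (\<Sum>i\<in>U. x i * y i))" .
  then show ?thesis unfolding avg_def cS
    by (rule ssubst[where P="\<lambda>z. z / _ = _"], intro div_aux) (use Cpos in simp)
qed

lemma design_exp:
  assumes "Nv1 + Ncv2 \<le> N"
  shows "measure_pmf.expectation (sw_design N Nv1 Ncv2) f =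
    avg {A. A \<subseteq> {..<N} \<and> card A = Nv1} (\<lambda>A. avg {B. B \<subseteq> {..<N} - A \<and> card B = Ncv2} (\<lambda>B. f (A,B)))"
proof -
  let ?SA = "{A. A \<subseteq> {..<N} \<and> card A = Nv1}"
  let ?SB = "\<lambda>A. {B. B \<subseteq> {..<N} - A \<and> card B = Ncv2}"
  have fSA: "finite ?SA" by (rule finite_subsets_k) simp
  have cSA: "card ?SA = N choose Nv1" using n_subsets[of "{..<N}" Nv1] by simp
  have neSA: "?SA \<noteq> {}" proof -
    have "card ?SA > 0" using cSA assms by simp
    then show ?thesis by (metis card.empty less_irrefl)
  qed
  have fSB: "finite (?SB A)" for A by (rule finite_subsets_k) simp
  have cW: "A \<in> ?SA \<Longrightarrow> card ({..<N} - A) = N - Nv1" for A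
    by (simp add: card_Diff_subset finite_subset[of A "{..<N}"])
  have cSB: "A \<in> ?SA \<Longrightarrow> card (?SB A) = (N - Nv1) choose Ncv2" for A
    using n_subsets[of "{..<N} - A" Ncv2] cW[of A] by simp
  have neSB: "A \<in> ?SA \<Longrightarrow> ?SB A \<noteq> {}" for A
  proof -
    assume "A \<in> ?SA"
    then have "card (?SB A) > 0" using cSB[of A] assms by simp
    then show ?thesis by (metis card.empty less_irrefl)
  qed
  have inner: "A \<in> ?SA \<Longrightarrow> measure_pmf.expectation (pmf_of_set (?SB A) \<bind> (\<lambda>B. return_pmf (A, B))) f
      = avg (?SB A) (\<lambda>B. f (A,B))" for A
    using neSB[of A] fSB[of A]
    by (subst pmf_expectation_bind_pmf_of_set) (auto simp: avg_def sum_divide_distrib divide_inverse_commute sum_distrib_left)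
  have fin: "A \<in> ?SA \<Longrightarrow> finite (set_pmf (pmf_of_set (?SB A) \<bind> (\<lambda>B. return_pmf (A, B))))" for A
    using neSB[of A] fSB[of A] by simp
  have "measure_pmf.expectation (sw_design N Nv1 Ncv2) f =
      (\<Sum>A\<in>?SA. measure_pmf.expectation (pmf_of_set (?SB A) \<bind> (\<lambda>B. return_pmf (A, B))) f /\<^sub>R real (card ?SA))"
    unfolding sw_design_def by (rule pmf_expectation_bind_pmf_of_set[OF neSA fSA fin])
  also have "\<dots> = (\<Sum>A\<in>?SA. avg (?SB A) (\<lambda>B. f (A,B)) / real (card ?SA))"
    by (rule sum.cong[OF refl]) (simp add: inner divide_inverse_commute)
  finally show ?thesis by (simp add: avg_def sum_divide_distrib)
qed

lemma coef_combine:
  fixes \<alpha> \<beta> \<gamma> n1 n2 n3 Qaa Qbb Qdd Qab Qad Qbd :: real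
  shows "\<alpha>*(Qaa/n2^2 + 2*Qad/(n2*n3) + Qdd/n3^2) + \<beta>*(Qab/(n1*n2) - Qad/(n2*n3) + Qbd/(n1*n3) - Qdd/n3^2)
    + \<gamma>*(Qbb/n1^2 - 2*Qbd/(n1*n3) + Qdd/n3^2)
   = Qaa*(\<alpha>/n2^2) + Qbb*(\<gamma>/n1^2) + Qdd*(\<alpha>/n3^2 - \<beta>/n3^2 + \<gamma>/n3^2) + Qab*(\<beta>/(n1*n2))
     + Qad*(2*\<alpha>/(n2*n3) - \<beta>/(n2*n3)) + Qbd*(\<beta>/(n1*n3) - 2*\<gamma>/(n1*n3))"
  by (simp add: divide_inverse algebra_simps)

lemma coefs:
  fixes n1 n2 n3 n w m vv :: real
  assumes h1: "n1 \<ge> 1" and h2: "n2 \<ge> 1" and h3: "n3 \<ge> 1" and hn: "n = n1+n2+n3" and hw: "w = n2+n3"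
    and hm: "m = n - 1" and hv: "vv = w - 1"
    and al: "\<alpha> = (n2/w - n2*(n2-1)/(w* vv))*(1 - n1/n) + n2*(n2-1)/(w* vv)*(n1/n - n1*(n1-1)/(n*m))"
    and be: "\<beta> = 2*(n2/w)*(n1/n - n1*(n1-1)/(n*m))"
    and ga: "\<gamma> = n1/n - n1*(n1-1)/(n*m)"
  shows "\<alpha>/n2^2 = 1/(n2*m) - 1/(n*m)"
    and "\<gamma>/n1^2 = 1/(n1*m) - 1/(n*m)"
    and "\<alpha>/n3^2 - \<beta>/n3^2 + \<gamma>/n3^2 = 1/(n3*m) - 1/(n*m)"
    and "\<beta>/(n1*n2) = 2/(n*m)"
    and "2*\<alpha>/(n2*n3) - \<beta>/(n2*n3) = 2/(n*m)"
    and "\<beta>/(n1*n3) - 2*\<gamma>/(n1*n3) = -2/(n*m)"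
proof -
  have a: "n \<noteq> 0" "m \<noteq> 0" "w \<noteq> 0" "vv \<noteq> 0" "n1 \<noteq> 0" "n2\<noteq>0" "n3\<noteq>0"
    using h1 h2 h3 hn hw hm hv by linarith+
  have pw: "n2/w - n2*(n2-1)/(w* vv) = n2*n3/(w* vv)"
  proof -
    have "n2/w - n2*(n2-1)/(w* vv) = n2*(vv - (n2-1))/(w* vv)" using a by (simp add: field_simps)
    also have "vv - (n2 - 1) = n3" using hv hw by simp
    finally show ?thesis .
  qed
  have p1: "n1/n - n1*(n1-1)/(n*m) = n1*w/(n*m)"
  proof -
    have "n1/n - n1*(n1-1)/(n*m) = n1*(m - (n1-1))/(n*m)" using a by (simp add: field_simps)
    also have "m - (n1 - 1) = w" using hm hn hw by simp
    finally show ?thesis .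
  qed
  have p0: "1 - n1/n = w/n"
  proof -
    have "1 - n1/n = (n - n1)/n" using a by (simp add: field_simps)
    also have "n - n1 = w" using hn hw by simp
    finally show ?thesis .
  qed
  have ga': "\<gamma> = n1*w/(n*m)" using ga p1 by simp
  have be'': "\<beta> = 2*(n2/w)*(n1*w/(n*m))" unfolding be p1 ..
  have be': "\<beta> = 2*n1*n2/(n*m)" unfolding be'' using a by (simp add: field_simps)
  have al': "\<alpha> = n2*(n1+n3)/(n*m)"
  proof -
    have "\<alpha> = n2*n3/(w* vv) * (w/n) + n2*(n2-1)/(w* vv) * (n1*w/(n*m))" using al pw p1 p0 by simp
    also have "\<dots> = n2*(n3*m + n1*(n2-1))/(vv*n*m)" using a by (simp add: field_simps)
    also have "n3*m + n1*(n2-1) = vv*(n1+n3)"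
    proof -
      have e1: "m = n1+n2+n3-1" "vv = n2+n3-1" using hm hn hv hw by simp_all
      show ?thesis unfolding e1 by (simp add: algebra_simps)
    qed
    also have "n2*(vv*(n1+n3))/(vv*n*m) = n2*(n1+n3)/(n*m)" using a by (simp add: field_simps)
    finally show ?thesis .
  qed
  show "\<alpha>/n2^2 = 1/(n2*m) - 1/(n*m)" unfolding al' using a
    apply (simp add: field_simps power2_eq_square) apply (simp_all add: hn hw algebra_simps) done
  show "\<gamma>/n1^2 = 1/(n1*m) - 1/(n*m)" unfolding ga' using a
    apply (simp add: field_simps power2_eq_square) apply (simp_all add: hn hw algebra_simps) done
  show "\<alpha>/n3^2 - \<beta>/n3^2 + \<gamma>/n3^2 = 1/(n3*m) - 1/(n*m)" unfolding al' be' ga' using a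
    apply (simp add: field_simps power2_eq_square) apply (simp_all add: hn hw algebra_simps) done
  show "\<beta>/(n1*n2) = 2/(n*m)" unfolding be' using a
    apply (simp add: field_simps power2_eq_square) done
  show "2*\<alpha>/(n2*n3) - \<beta>/(n2*n3) = 2/(n*m)" unfolding al' be' using a
    apply (simp add: field_simps power2_eq_square) done
  show "\<beta>/(n1*n3) - 2*\<gamma>/(n1*n3) = -2/(n*m)" unfolding be' ga' using a
    apply (simp add: field_simps power2_eq_square) apply (simp_all add: hn hw algebra_simps) done
qed

lemma sq_lemma: fixes x y :: "nat \<Rightarrow> real" shows
  "(\<Sum>i\<in>I. (x i/p + y i/q) * (x i/p + y i/q)) = (\<Sum>i\<in>I. x i*x i)/p^2 + 2*(\<Sum>i\<in>I. x i*y i)/(p*q) + (\<Sum>i\<in>I. y i*y i)/q^2"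
proof -
  have "(\<Sum>i\<in>I. (x i/p + y i/q) * (x i/p + y i/q)) = (\<Sum>i\<in>I. x i*x i/p^2 + 2*(x i*y i)/(p*q) + y i*y i/q^2)"
    by (rule sum.cong[OF refl]) (simp add: divide_inverse algebra_simps power2_eq_square)
  also have "\<dots> = (\<Sum>i\<in>I. x i*x i)/p^2 + 2*(\<Sum>i\<in>I. x i*y i)/(p*q) + (\<Sum>i\<in>I. y i*y i)/q^2"
    by (simp add: sum.distrib sum_divide_distrib sum_distrib_left)
  finally show ?thesis .
qed

lemma dif_lemma: fixes y z :: "nat \<Rightarrow> real" shows
  "(\<Sum>i\<in>I. (y i/p - z i/q) * (y i/p - z i/q)) = (\<Sum>i\<in>I. y i*y i)/p^2 - 2*(\<Sum>i\<in>I. y i*z i)/(p*q) + (\<Sum>i\<in>I. z i*z i)/q^2"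
proof -
  have "(\<Sum>i\<in>I. (y i/p - z i/q) * (y i/p - z i/q)) = (\<Sum>i\<in>I. y i*y i/p^2 - 2*(y i*z i)/(p*q) + z i*z i/q^2)"
    by (rule sum.cong[OF refl]) (simp add: divide_inverse algebra_simps power2_eq_square)
  also have "\<dots> = (\<Sum>i\<in>I. y i*y i)/p^2 - 2*(\<Sum>i\<in>I. y i*z i)/(p*q) + (\<Sum>i\<in>I. z i*z i)/q^2"
    by (simp add: sum.distrib sum_subtractf sum_divide_distrib sum_distrib_left)
  finally show ?thesis .
qed

lemma mix_lemma: fixes x y z :: "nat \<Rightarrow> real" shows
  "(\<Sum>i\<in>I. (y i/p - z i/q) * (x i/r + z i/q)) = (\<Sum>i\<in>I. x i*y i)/(p*r) - (\<Sum>i\<in>I. x i*z i)/(r*q) + (\<Sum>i\<in>I. y i*z i)/(p*q) - (\<Sum>i\<in>I. z i*z i)/q^2"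
proof -
  have "(\<Sum>i\<in>I. (y i/p - z i/q) * (x i/r + z i/q)) = (\<Sum>i\<in>I. x i*y i/(p*r) - x i*z i/(r*q) + y i*z i/(p*q) - z i*z i/q^2)"
    by (rule sum.cong[OF refl]) (simp add: divide_inverse algebra_simps power2_eq_square)
  also have "\<dots> = (\<Sum>i\<in>I. x i*y i)/(p*r) - (\<Sum>i\<in>I. x i*z i)/(r*q) + (\<Sum>i\<in>I. y i*z i)/(p*q) - (\<Sum>i\<in>I. z i*z i)/q^2"
    by (simp add: sum.distrib sum_subtractf sum_divide_distrib)
  finally show ?thesis .
qed

lemma tri_lemma: fixes x y z :: "nat \<Rightarrow> real" shows
  "(\<Sum>i\<in>I. (x i - y i - z i) * (x i - y i - z i)) = (\<Sum>i\<in>I. x i*x i) + (\<Sum>i\<in>I. y i*y i) + (\<Sum>i\<in>I. z i*z i)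
     - 2*(\<Sum>i\<in>I. x i*y i) - 2*(\<Sum>i\<in>I. x i*z i) + 2*(\<Sum>i\<in>I. y i*z i)"
proof -
  have "(\<Sum>i\<in>I. (x i - y i - z i) * (x i - y i - z i)) = (\<Sum>i\<in>I. x i*x i + y i*y i + z i*z i - 2*(x i*y i) - 2*(x i*z i) + 2*(y i*z i))"
    by (rule sum.cong[OF refl]) (simp add: algebra_simps)
  also have "\<dots> = (\<Sum>i\<in>I. x i*x i) + (\<Sum>i\<in>I. y i*y i) + (\<Sum>i\<in>I. z i*z i)
     - 2*(\<Sum>i\<in>I. x i*y i) - 2*(\<Sum>i\<in>I. x i*z i) + 2*(\<Sum>i\<in>I. y i*z i)"
    by (simp add: sum.distrib sum_subtractf sum_distrib_left)
  finally show ?thesis .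
qed

lemma final2:
  fixes n1 n2 n3 n w Qaa Qbb Qdd Qab Qad Qbd Qee Qge Qgg :: real
  assumes h1: "n1 \<ge> 1" and h2: "n2 \<ge> 1" and h3: "n3 \<ge> 1" and hn: "n = n1+n2+n3" and hw: "w = n2+n3"
    and qee: "Qee = Qaa/n2^2 + 2*Qad/(n2*n3) + Qdd/n3^2"
    and qge: "Qge = Qab/(n1*n2) - Qad/(n2*n3) + Qbd/(n1*n3) - Qdd/n3^2"
    and qgg: "Qgg = Qbb/n1^2 - 2*Qbd/(n1*n3) + Qdd/n3^2"
  shows "(n2/w - n2*(n2-1)/(w*(w-1)))*(Qee - n1/n*Qee) + n2*(n2-1)/(w*(w-1))*((n1/n - n1*(n1-1)/(n*(n-1)))*Qee)
     + 2*(n2/w)*((n1/n - n1*(n1-1)/(n*(n-1)))*Qge) + (n1/n - n1*(n1-1)/(n*(n-1)))*Qgg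
   = 1/n2*(1/(n-1)*Qaa) + 1/n1*(1/(n-1)*Qbb) + 1/n3*(1/(n-1)*Qdd) - 1/n*(1/(n-1))*(Qaa+Qbb+Qdd-2*Qab-2*Qad+2*Qbd)"
proof -
  define m where "m = n - 1"
  define vv where "vv = w - 1"
  define \<alpha> where "\<alpha> = (n2/w - n2*(n2-1)/(w * vv))*(1 - n1/n) + n2*(n2-1)/(w * vv)*(n1/n - n1*(n1-1)/(n*m))"
  define \<beta> where "\<beta> = 2*(n2/w)*(n1/n - n1*(n1-1)/(n*m))"
  define \<gamma> where "\<gamma> = n1/n - n1*(n1-1)/(n*m)"
  note c = coefs[OF h1 h2 h3 hn hw m_def vv_def \<alpha>_def \<beta>_def \<gamma>_def]
  have "(n2/w - n2*(n2-1)/(w*(w-1)))*(Qee - n1/n*Qee) + n2*(n2-1)/(w*(w-1))*((n1/n - n1*(n1-1)/(n*(n-1)))*Qee)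
     + 2*(n2/w)*((n1/n - n1*(n1-1)/(n*(n-1)))*Qge) + (n1/n - n1*(n1-1)/(n*(n-1)))*Qgg
     = \<alpha>*Qee + \<beta>*Qge + \<gamma>*Qgg"
    unfolding \<alpha>_def \<beta>_def \<gamma>_def m_def vv_def by (simp add: divide_inverse algebra_simps)
  also have "\<dots> = Qaa*(\<alpha>/n2^2) + Qbb*(\<gamma>/n1^2) + Qdd*(\<alpha>/n3^2 - \<beta>/n3^2 + \<gamma>/n3^2) + Qab*(\<beta>/(n1*n2))
     + Qad*(2*\<alpha>/(n2*n3) - \<beta>/(n2*n3)) + Qbd*(\<beta>/(n1*n3) - 2*\<gamma>/(n1*n3))"
    unfolding qee qge qgg by (rule coef_combine)
  also have "\<dots> = Qaa*(1/(n2*m) - 1/(n*m)) + Qbb*(1/(n1*m) - 1/(n*m)) + Qdd*(1/(n3*m) - 1/(n*m)) + Qab*(2/(n*m))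
     + Qad*(2/(n*m)) + Qbd*(-2/(n*m))"
    unfolding c ..
  also have "\<dots> = 1/n2*(1/(n-1)*Qaa) + 1/n1*(1/(n-1)*Qbb) + 1/n3*(1/(n-1)*Qdd) - 1/n*(1/(n-1))*(Qaa+Qbb+Qdd-2*Qab-2*Qad+2*Qbd)"
  proof -
    have nm: "n - 1 = m" by (simp add: m_def)
    show ?thesis by (simp only: nm) (simp add: divide_inverse algebra_simps)
  qed
  finally show ?thesis .
qed




lemma sum_shift: "finite X \<Longrightarrow> (\<Sum>i\<in>X. x i - c) = (\<Sum>i\<in>X. x i) - real (card X) * (c::real)"
  by (simp add: sum_subtractf)

theorem theorem1:
  fixes N Nv1 Ncv2 Ncc :: nat
    and Y1 :: "nat \<Rightarrow> trt \<Rightarrow> real"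
    and Y2 :: "nat \<Rightarrow> trt \<Rightarrow> trt \<Rightarrow> real"
  assumes pos: "Nv1 > 0" "Ncv2 > 0" "Ncc > 0"
    and sum: "Nv1 + Ncv2 + Ncc = N"
    and tice: "\<And>i v. i < N \<Longrightarrow> v \<in> {V1, V2} \<Longrightarrow>
                 Y2 i C v - Y2 i C C = Y1 i v - Y1 i C"
  shows "measure_pmf.expectation (sw_design N Nv1 Ncv2) (tau1_hat N Nv1 Ncv2 Ncc Y1 Y2)
           = tau1 N Y1 \<and>
         measure_pmf.variance (sw_design N Nv1 Ncv2) (tau1_hat N Nv1 Ncv2 Ncc Y1 Y2)
           = (1 / real Ncv2) * S2 N (\<lambda>i. Y2 i C V2)
           + (1 / real Nv1) * S2 N (\<lambda>i. Y1 i V1)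
           + (1 / real Ncc) * S2 N (\<lambda>i. Y2 i C C - Y1 i C)
           - (1 / real N) * (1 / (real N - 1)) *
               (\<Sum>i<N. (Y2 i C V2 - Y1 i V1 - (Y2 i C C - Y1 i C) - tau1 N Y1)\<^sup>2)"
proof -
  define a where "a = (\<lambda>i. Y2 i C V2)"
  define b where "b = (\<lambda>i. Y1 i V1)"
  define d where "d = (\<lambda>i. Y2 i C C - Y1 i C)"
  define a' where "a' = (\<lambda>i. a i - 1 / real N * (\<Sum>j<N. a j))"
  define b' where "b' = (\<lambda>i. b i - 1 / real N * (\<Sum>j<N. b j))"
  define d' where "d' = (\<lambda>i. d i - 1 / real N * (\<Sum>j<N. d j))"
  define e where "e = (\<lambda>i. a' i / real Ncv2 + d' i / real Ncc)"
  define g where "g = (\<lambda>i. b' i / real Nv1 - d' i / real Ncc)"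
  define SA where "SA = {A. A \<subseteq> {..<N} \<and> card A = Nv1}"
  define SB where "SB = (\<lambda>A. {B. B \<subseteq> {..<N} - A \<and> card B = Ncv2})"
  define Yf where "Yf = (\<lambda>AB. (\<Sum>i\<in>snd AB. e i) - (\<Sum>i\<in>fst AB. g i))"
  define \<tau> where "\<tau> = tau1 N Y1"
  define n1 where "n1 = real Nv1"
  define n2 where "n2 = real Ncv2"
  define n3 where "n3 = real Ncc"
  define n where "n = real N"
  define w where "w = real (N - Nv1)"
  have n1pos: "n1 \<ge> 1" and n2pos: "n2 \<ge> 1" and n3pos: "n3 \<ge> 1" using pos by (auto simp: n1_def n2_def n3_def)
  have nsum: "n = n1 + n2 + n3" using sum by (auto simp: n_def n1_def n2_def n3_def)
  have wsum: "w = n2 + n3" using sum by (auto simp: w_def n2_def n3_def)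
  have Npos: "N > 0" using sum pos by auto
  have sa': "(\<Sum>i<N. a' i) = 0" using Npos by (simp add: a'_def sum_subtractf)
  have sb': "(\<Sum>i<N. b' i) = 0" using Npos by (simp add: b'_def sum_subtractf)
  have sd': "(\<Sum>i<N. d' i) = 0" using Npos by (simp add: d'_def sum_subtractf)
  have se: "(\<Sum>i<N. e i) = 0" unfolding e_def
    by (simp add: sum.distrib sum_divide_distrib[symmetric] sa' sd')
  have sg: "(\<Sum>i<N. g i) = 0" unfolding g_def
    by (simp add: sum_subtractf sum_divide_distrib[symmetric] sb' sd')
  have tau_eq: "\<tau> = (\<Sum>i<N. a i) / real N - (\<Sum>i<N. b i) / real N - (\<Sum>i<N. d i) / real N"
  proof -
    have "(\<Sum>i<N. Y1 i V2 - Y1 i V1) = (\<Sum>i<N. a i - b i - d i)"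
    proof (rule sum.cong[OF refl])
      fix i assume "i \<in> {..<N}"
      then have "Y2 i C V2 - Y2 i C C = Y1 i V2 - Y1 i C" using tice by auto
      then show "Y1 i V2 - Y1 i V1 = a i - b i - d i" by (simp add: a_def b_def d_def)
    qed
    then show ?thesis unfolding \<tau>_def tau1_def
      by (simp add: sum_subtractf diff_divide_distrib)
  qed
  have rep: "tau1_hat N Nv1 Ncv2 Ncc Y1 Y2 (A,B) = Yf (A,B) + \<tau>" if "A \<in> SA" "B \<in> SB A" for A B
  proof -
    from that have AU: "A \<subseteq> {..<N}" "card A = Nv1" "B \<subseteq> {..<N} - A" "card B = Ncv2"
      by (auto simp: SA_def SB_def)
    have fA: "finite A" using AU(1) by (rule finite_subset) simp
    have fB: "finite B" using AU(3) by (rule finite_subset) simp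
    have s1: "(\<Sum>i<N. Y2obs Y2 (A,B) i * ind (Z1 (A,B) i = C \<and> Z2 (A,B) i = V2)) = (\<Sum>i\<in>B. a i)"
    proof -
      have "(\<Sum>i<N. Y2obs Y2 (A,B) i * ind (Z1 (A,B) i = C \<and> Z2 (A,B) i = V2)) = (\<Sum>i<N. if i \<in> B then a i else 0)"
        by (rule sum.cong[OF refl]) (use AU in \<open>auto simp: Y2obs_def Z1_def Z2_def ind_def a_def\<close>)
      also have "\<dots> = (\<Sum>i\<in>B. a i)" using AU by (intro sum_restrict_sub) auto
      finally show ?thesis .
    qed
    have s2: "(\<Sum>i<N. Y1obs Y1 (A,B) i * ind (Z1 (A,B) i = V1)) = (\<Sum>i\<in>A. b i)"
    proof -
      have "(\<Sum>i<N. Y1obs Y1 (A,B) i * ind (Z1 (A,B) i = V1)) = (\<Sum>i<N. if i \<in> A then b i else 0)"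
        by (rule sum.cong[OF refl]) (use AU in \<open>auto simp: Y1obs_def Z1_def ind_def b_def\<close>)
      also have "\<dots> = (\<Sum>i\<in>A. b i)" using AU by (intro sum_restrict_sub) auto
      finally show ?thesis .
    qed
    have s3: "(\<Sum>i<N. (Y2obs Y2 (A,B) i - Y1obs Y1 (A,B) i) * ind (Z1 (A,B) i = C \<and> Z2 (A,B) i = C))
        = (\<Sum>i<N. d i) - (\<Sum>i\<in>A. d i) - (\<Sum>i\<in>B. d i)"
    proof -
      have "(\<Sum>i<N. (Y2obs Y2 (A,B) i - Y1obs Y1 (A,B) i) * ind (Z1 (A,B) i = C \<and> Z2 (A,B) i = C))
          = (\<Sum>i<N. if i \<in> {..<N} - (A \<union> B) then d i else 0)"
        by (rule sum.cong[OF refl]) (use AU in \<open>auto simp: Y1obs_def Y2obs_def Z1_def Z2_def ind_def d_def\<close>)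
      also have "\<dots> = (\<Sum>i\<in>{..<N} - (A \<union> B). d i)" by (intro sum_restrict_sub) auto
      also have "\<dots> = (\<Sum>i<N. d i) - (\<Sum>i\<in>A \<union> B. d i)" using AU by (intro sum_diff) auto
      also have "(\<Sum>i\<in>A \<union> B. d i) = (\<Sum>i\<in>A. d i) + (\<Sum>i\<in>B. d i)"
        using AU fA fB by (intro sum.union_disjoint) auto
      finally show ?thesis by simp
    qed
    have eB: "(\<Sum>i\<in>B. e i) = ((\<Sum>i\<in>B. a i) - n2 * (1 / n * (\<Sum>j<N. a j))) / n2
        + ((\<Sum>i\<in>B. d i) - n2 * (1 / n * (\<Sum>j<N. d j))) / n3"
      unfolding e_def a'_def d'_def using fB AU
      by (simp add: sum.distrib sum_divide_distrib[symmetric] sum_shift n_def n2_def n3_def)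
    have gA: "(\<Sum>i\<in>A. g i) = ((\<Sum>i\<in>A. b i) - n1 * (1 / n * (\<Sum>j<N. b j))) / n1
        - ((\<Sum>i\<in>A. d i) - n1 * (1 / n * (\<Sum>j<N. d j))) / n3"
      unfolding g_def b'_def d'_def using fA AU
      by (simp add: sum_subtractf sum_divide_distrib[symmetric] sum_shift n_def n1_def n3_def)
    have nz: "n1 \<noteq> 0" "n2 \<noteq> 0" "n3 \<noteq> 0" "n \<noteq> 0" using n1pos n2pos n3pos nsum by linarith+
    show ?thesis
      unfolding tau1_hat_def s1 s2 s3 Yf_def fst_conv snd_conv eB gA tau_eq
      unfolding n1_def[symmetric] n2_def[symmetric] n3_def[symmetric] n_def[symmetric]
      using nz apply (simp add: field_simps) by (simp add: nsum algebra_simps)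
  qed
  have E: "\<And>f. measure_pmf.expectation (sw_design N Nv1 Ncv2) f = avg SA (\<lambda>A. avg (SB A) (\<lambda>B. f (A,B)))"
    unfolding SA_def SB_def using sum by (intro design_exp) simp
  have NW: "Ncv2 \<le> N - Nv1" using sum by simp
  have NW2: "N - Nv1 \<ge> 2" using sum pos by simp
  have N2: "card {..<N} \<ge> 2" using sum pos by simp
  have Afin: "finite ({..<N} - A)" "card ({..<N} - A) = N - Nv1" "A \<subseteq> {..<N}" "finite A" if "A \<in> SA" for A
    using that by (auto simp: SA_def card_Diff_subset finite_subset[of A "{..<N}"])
  have cSB: "card (SB A) > 0" if "A \<in> SA" for A
  proof -
    have "card (SB A) = (N - Nv1) choose Ncv2"
      unfolding SB_def using n_subsets[of "{..<N} - A" Ncv2] Afin[OF that] by simp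
    then show ?thesis using NW by simp
  qed
  have cSA: "card SA > 0"
  proof -
    have "card SA = N choose Nv1" unfolding SA_def using n_subsets[of "{..<N}" Nv1] by simp
    then show ?thesis using sum by simp
  qed
  define Qee where "Qee = (\<Sum>i<N. e i * e i)"
  define Qge where "Qge = (\<Sum>i<N. g i * e i)"
  define Qgg where "Qgg = (\<Sum>i<N. g i * g i)"
  define \<beta> where "\<beta> = n2 * (n2 - 1) / (w * (w - 1))"
  define P1 where "P1 = n1 / n - n1 * (n1 - 1) / (n * (n - 1))"
  have sWe: "(\<Sum>i\<in>{..<N} - A. e i) = - (\<Sum>i\<in>A. e i)" if "A \<in> SA" for A
    using Afin[OF that] se by (simp add: sum_diff)
  have sWee: "(\<Sum>i\<in>{..<N} - A. e i * e i) = Qee - (\<Sum>i\<in>A. e i * e i)" if "A \<in> SA" for A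
    using Afin[OF that] by (simp add: sum_diff Qee_def)
  have in1: "avg (SB A) (\<lambda>B. \<Sum>i\<in>B. e i) = n2 / w * (- (\<Sum>i\<in>A. e i))" if "A \<in> SA" for A
    using srs1[of "{..<N} - A" Ncv2 e] Afin[OF that] NW sWe[OF that]
    by (simp add: SB_def n2_def w_def)
  have in2: "avg (SB A) (\<lambda>B. (\<Sum>i\<in>B. e i) * (\<Sum>i\<in>B. e i))
      = (n2 / w - \<beta>) * (Qee - (\<Sum>i\<in>A. e i * e i)) + \<beta> * (\<Sum>i\<in>A. e i) * (\<Sum>i\<in>A. e i)" if "A \<in> SA" for A
    using srs2[of "{..<N} - A" Ncv2 e e] Afin[OF that] NW NW2 sWe[OF that] sWee[OF that]
    by (simp add: SB_def n2_def w_def \<beta>_def)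
  have inY: "avg (SB A) (\<lambda>B. Yf (A,B)) = - (n2 / w) * (\<Sum>i\<in>A. e i) - (\<Sum>i\<in>A. g i)" if "A \<in> SA" for A
    unfolding Yf_def fst_conv snd_conv avg_diff in1[OF that] avg_const[OF cSB[OF that]] by simp
  have inY2: "avg (SB A) (\<lambda>B. (Yf (A,B))\<^sup>2) = (n2 / w - \<beta>) * (Qee - (\<Sum>i\<in>A. e i * e i))
      + \<beta> * ((\<Sum>i\<in>A. e i) * (\<Sum>i\<in>A. e i)) + 2 * (n2 / w) * ((\<Sum>i\<in>A. g i) * (\<Sum>i\<in>A. e i))
      + (\<Sum>i\<in>A. g i) * (\<Sum>i\<in>A. g i)" if "A \<in> SA" for A
  proof -
    let ?r = "\<Sum>i\<in>A. g i"
    have "avg (SB A) (\<lambda>B. (Yf (A,B))\<^sup>2) = avg (SB A) (\<lambda>B. (\<Sum>i\<in>B. e i) * (\<Sum>i\<in>B. e i) - (2 * ?r) * (\<Sum>i\<in>B. e i) + ?r * ?r)"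
      unfolding Yf_def fst_conv snd_conv by (rule avg_cong) (simp add: power2_eq_square algebra_simps)
    also have "\<dots> = avg (SB A) (\<lambda>B. (\<Sum>i\<in>B. e i) * (\<Sum>i\<in>B. e i)) - (2 * ?r) * avg (SB A) (\<lambda>B. \<Sum>i\<in>B. e i) + ?r * ?r"
      by (simp only: avg_add avg_diff avg_cmult avg_const[OF cSB[OF that]])
    also have "\<dots> = (n2 / w - \<beta>) * (Qee - (\<Sum>i\<in>A. e i * e i))
      + \<beta> * ((\<Sum>i\<in>A. e i) * (\<Sum>i\<in>A. e i)) + 2 * (n2 / w) * ((\<Sum>i\<in>A. g i) * (\<Sum>i\<in>A. e i))
      + (\<Sum>i\<in>A. g i) * (\<Sum>i\<in>A. g i)"
      unfolding in1[OF that] in2[OF that] by (simp add: algebra_simps)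
    finally show ?thesis .
  qed
  have cardU: "card {..<N} = N" by simp
  have o_s: "avg SA (\<lambda>A. \<Sum>i\<in>A. e i) = 0"
    using srs1[of "{..<N}" Nv1 e] sum se by (simp add: SA_def)
  have o_r: "avg SA (\<lambda>A. \<Sum>i\<in>A. g i) = 0"
    using srs1[of "{..<N}" Nv1 g] sum sg by (simp add: SA_def)
  have o_h: "avg SA (\<lambda>A. \<Sum>i\<in>A. e i * e i) = n1 / n * Qee"
    using srs1[of "{..<N}" Nv1 "\<lambda>i. e i * e i"] sum by (simp add: SA_def Qee_def n1_def n_def)
  have o_ss: "avg SA (\<lambda>A. (\<Sum>i\<in>A. e i) * (\<Sum>i\<in>A. e i)) = P1 * Qee"
    using srs2[of "{..<N}" Nv1 e e] sum N2 se by (simp add: SA_def Qee_def n1_def n_def P1_def)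
  have o_rs: "avg SA (\<lambda>A. (\<Sum>i\<in>A. g i) * (\<Sum>i\<in>A. e i)) = P1 * Qge"
    using srs2[of "{..<N}" Nv1 g e] sum N2 se by (simp add: SA_def Qge_def n1_def n_def P1_def)
  have o_rr: "avg SA (\<lambda>A. (\<Sum>i\<in>A. g i) * (\<Sum>i\<in>A. g i)) = P1 * Qgg"
    using srs2[of "{..<N}" Nv1 g g] sum N2 sg by (simp add: SA_def Qgg_def n1_def n_def P1_def)
  have EY: "measure_pmf.expectation (sw_design N Nv1 Ncv2) (tau1_hat N Nv1 Ncv2 Ncc Y1 Y2) = \<tau>"
  proof -
    have "measure_pmf.expectation (sw_design N Nv1 Ncv2) (tau1_hat N Nv1 Ncv2 Ncc Y1 Y2)
        = avg SA (\<lambda>A. avg (SB A) (\<lambda>B. Yf (A,B) + \<tau>))"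
      unfolding E by (intro avg_cong) (simp add: rep)
    also have "\<dots> = avg SA (\<lambda>A. - (n2 / w) * (\<Sum>i\<in>A. e i) - (\<Sum>i\<in>A. g i) + \<tau>)"
      by (intro avg_cong) (simp add: avg_add inY avg_const cSB)
    also have "\<dots> = \<tau>"
      by (simp only: avg_add avg_diff avg_cmult avg_const[OF cSA] o_s o_r)
    finally show ?thesis .
  qed
  have VY: "measure_pmf.variance (sw_design N Nv1 Ncv2) (tau1_hat N Nv1 Ncv2 Ncc Y1 Y2)
      = (n2 / w - \<beta>) * (Qee - n1 / n * Qee) + \<beta> * (P1 * Qee) + 2 * (n2 / w) * (P1 * Qge) + P1 * Qgg"
  proof -
    have "measure_pmf.variance (sw_design N Nv1 Ncv2) (tau1_hat N Nv1 Ncv2 Ncc Y1 Y2)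
        = avg SA (\<lambda>A. avg (SB A) (\<lambda>B. (Yf (A,B))\<^sup>2))"
      unfolding EY unfolding E by (intro avg_cong) (simp add: rep)
    also have "\<dots> = avg SA (\<lambda>A. (n2 / w - \<beta>) * (Qee - (\<Sum>i\<in>A. e i * e i))
      + \<beta> * ((\<Sum>i\<in>A. e i) * (\<Sum>i\<in>A. e i)) + 2 * (n2 / w) * ((\<Sum>i\<in>A. g i) * (\<Sum>i\<in>A. e i))
      + (\<Sum>i\<in>A. g i) * (\<Sum>i\<in>A. g i))"
      by (intro avg_cong) (simp add: inY2)
    also have "\<dots> = (n2 / w - \<beta>) * (Qee - n1 / n * Qee) + \<beta> * (P1 * Qee) + 2 * (n2 / w) * (P1 * Qge) + P1 * Qgg"
      by (simp only: avg_add avg_diff avg_cmult avg_const[OF cSA] o_h o_ss o_rs o_rr)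
    finally show ?thesis .
  qed
  define Qaa where "Qaa = (\<Sum>i<N. a' i * a' i)"
  define Qbb where "Qbb = (\<Sum>i<N. b' i * b' i)"
  define Qdd where "Qdd = (\<Sum>i<N. d' i * d' i)"
  define Qab where "Qab = (\<Sum>i<N. a' i * b' i)"
  define Qad where "Qad = (\<Sum>i<N. a' i * d' i)"
  define Qbd where "Qbd = (\<Sum>i<N. b' i * d' i)"
  have qee: "Qee = Qaa/n2^2 + 2*Qad/(n2*n3) + Qdd/n3^2"
    unfolding Qee_def e_def n2_def[symmetric] n3_def[symmetric] Qaa_def Qad_def Qdd_def by (rule sq_lemma)
  have qge: "Qge = Qab/(n1*n2) - Qad/(n2*n3) + Qbd/(n1*n3) - Qdd/n3^2"
    unfolding Qge_def e_def g_def n1_def[symmetric] n2_def[symmetric] n3_def[symmetric] Qab_def Qad_def Qbd_def Qdd_def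
    by (rule mix_lemma)
  have qgg: "Qgg = Qbb/n1^2 - 2*Qbd/(n1*n3) + Qdd/n3^2"
    unfolding Qgg_def g_def n1_def[symmetric] n3_def[symmetric] Qbb_def Qbd_def Qdd_def by (rule dif_lemma)
  have S2a: "S2 N (\<lambda>i. Y2 i C V2) = 1/(n-1) * Qaa"
    by (simp add: S2_def Qaa_def a'_def a_def power2_eq_square n_def)
  have S2b: "S2 N (\<lambda>i. Y1 i V1) = 1/(n-1) * Qbb"
    by (simp add: S2_def Qbb_def b'_def b_def power2_eq_square n_def)
  have S2d: "S2 N (\<lambda>i. Y2 i C C - Y1 i C) = 1/(n-1) * Qdd"
    by (simp add: S2_def Qdd_def d'_def d_def power2_eq_square n_def)
  have Stau: "(\<Sum>i<N. (Y2 i C V2 - Y1 i V1 - (Y2 i C C - Y1 i C) - tau1 N Y1)\<^sup>2)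
      = Qaa+Qbb+Qdd-2*Qab-2*Qad+2*Qbd"
  proof -
    have "(\<Sum>i<N. (Y2 i C V2 - Y1 i V1 - (Y2 i C C - Y1 i C) - tau1 N Y1)\<^sup>2)
        = (\<Sum>i<N. (a' i - b' i - d' i) * (a' i - b' i - d' i))"
    proof (rule sum.cong[OF refl])
      fix i assume "i \<in> {..<N}"
      have "Y2 i C V2 - Y1 i V1 - (Y2 i C C - Y1 i C) - tau1 N Y1 = a' i - b' i - d' i"
        using Npos unfolding tau_eq[unfolded \<tau>_def] a'_def b'_def d'_def
        by (simp add: a_def b_def d_def field_simps)
      then show "(Y2 i C V2 - Y1 i V1 - (Y2 i C C - Y1 i C) - tau1 N Y1)\<^sup>2 = (a' i - b' i - d' i) * (a' i - b' i - d' i)"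
        by (simp add: power2_eq_square)
    qed
    also have "\<dots> = Qaa+Qbb+Qdd-2*Qab-2*Qad+2*Qbd"
      unfolding Qaa_def Qbb_def Qdd_def Qab_def Qad_def Qbd_def by (rule tri_lemma)
    finally show ?thesis .
  qed
  have fin: "(n2 / w - \<beta>) * (Qee - n1 / n * Qee) + \<beta> * (P1 * Qee) + 2 * (n2 / w) * (P1 * Qge) + P1 * Qgg
     = 1/n2*(1/(n-1)*Qaa) + 1/n1*(1/(n-1)*Qbb) + 1/n3*(1/(n-1)*Qdd) - 1/n*(1/(n-1))*(Qaa+Qbb+Qdd-2*Qab-2*Qad+2*Qbd)"
    unfolding \<beta>_def P1_def by (rule final2[OF n1pos n2pos n3pos nsum wsum qee qge qgg])
  have "measure_pmf.variance (sw_design N Nv1 Ncv2) (tau1_hat N Nv1 Ncv2 Ncc Y1 Y2)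
           = (1 / real Ncv2) * S2 N (\<lambda>i. Y2 i C V2)
           + (1 / real Nv1) * S2 N (\<lambda>i. Y1 i V1)
           + (1 / real Ncc) * S2 N (\<lambda>i. Y2 i C C - Y1 i C)
           - (1 / real N) * (1 / (real N - 1)) *
               (\<Sum>i<N. (Y2 i C V2 - Y1 i V1 - (Y2 i C C - Y1 i C) - tau1 N Y1)\<^sup>2)"
    unfolding VY fin S2a S2b S2d Stau by (simp add: n_def n1_def n2_def n3_def)
  then show ?thesis using EY by (simp add: \<tau>_def)
qed


end
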